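(* Let $K,L,A$ be as in the context and suppose the $\lambda_t$ and $\Psi_i$ form an $A$-scaffold on $L$ of tolerance $\mathfrak{T}\ge1$ with shift parameters $b_1,\dots,b_n$. Let $s\in\mathbb{S}_{p^n}$ and $t\in\mathbb{S}_{p^n}(h)$. Let $\Psi$ be any element of $\Upsilon^{(s)}$, and set $\Phi=\pi^{-w(s)}\Psi$. Then: (i) If $s\preceq\mathfrak{a}(t)$, then there is a unit $y_{\Phi,t}\in\mathfrak{O}_K^\times$ such that $$\Phi\cdot\lambda_t\equiv\pi^{\epsilon(s,t)}y_{\Phi,t}\lambda_{H(s,t)}\pmod{\pi^{\epsilon(s,t)}\lambda_{H(s,t)}\mathfrak{P}_L^{\mathfrak{T}}}.$$ In particular, $v_L(\Phi\cdot\lambda_t)=H(s,t)$ if $s\preceq\mathfrak{a}(t)$ and $\epsilon(s,t)=0$, and $v_L(\Phi\cdot\lambda_t)=H(s,t)+p^n$ if $s\preceq\mathfrak{a}(t)$ and $\epsilon(s,t)=1$. (ii) If $s\not\preceq\mathfrak{a}(t)$, then $v_L(\Phi\cdot\lambda_t)\ge H(s,b)+\mathfrak{T}+t-b$.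
   Context: Let $K$ be a field complete with respect to a discrete valuation, with residue field of characteristic $p>0$ (not necessarily perfect). Let $L/K$ be totally ramified of degree $p^n$; $v_K,v_L$ normalized valuations, $\mathfrak{O}_K$, $\mathfrak{P}_L$ as usual; $\pi$ a fixed uniformizer of $K$. Let $A$ be a $K$-algebra with $\dim_K A=p^n$ acting $K$-linearly on $L$. Let $\mathbb{S}_{p^n}=\{0,\dots,p^n-1\}$, $s=\sum_{i=1}^n s_{(n-i)}p^{n-i}$ with digits in $\{0,\dots,p-1\}$, $s\preceq t$ iff $s_{(n-i)}\le t_{(n-i)}$ for all $i$. Given integers $b_1,\dots,b_n$ prime to $p$, $\mathfrak{b}(s)=\sum_i s_{(n-i)}p^{n-i}b_i$; for $t\in\mathbb{Z}$, $\mathfrak{a}(t)\in\mathbb{S}_{p^n}$ is the unique element with $\mathfrak{b}(\mathfrak{a}(t))\equiv-t\pmod{p^n}$. An $A$-scaffold on $L$ of tolerance $\mathfrak{T}\ge1$ (possibly $\infty$) with shift parameters $b_1,\dots,b_n$ consists of: (i) $\lambda_t\in L$ ($t\in\mathbb{Z}$) with $v_L(\lambda_t)=t$ and $\lambda_{t_1}\lambda_{t_2}^{-1}\in K$ whenever $t_1\equiv t_2\pmod{p^n}$; (ii) $\Psi_1,\dots,\Psi_n\in A$ with $\Psi_i\cdot1=0$ such that for each $i,t$ there is $u_{i,t}\in\mathfrak{O}_K^\times$ with $\Psi_i\cdot\lambda_t\equiv u_{i,t}\lambda_{t+p^{n-i}b_i}$ if $\mathfrak{a}(t)_{(n-i)}\ge1$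 and $\equiv0$ if $\mathfrak{a}(t)_{(n-i)}=0$, modulo $\lambda_{t+p^{n-i}b_i}\mathfrak{P}_L^{\mathfrak{T}}$ (equalities if $\mathfrak{T}=\infty$). For $s\in\mathbb{S}_{p^n}$, $\Upsilon^{(s)}$ is the set of monomials (words) in the not necessarily commuting elements $\Psi_1,\dots,\Psi_n$ in which, for each $i$, the exponents of $\Psi_i$ sum to $s_{(n-i)}$. Fix $h\in\mathbb{Z}$, $\mathbb{S}_{p^n}(h)=\{t\in\mathbb{Z}:h\le t<h+p^n\}$, $b\in\mathbb{S}_{p^n}(h)$ the unique element with $\mathfrak{a}(b)=p^n-1$, $r:\mathbb{Z}\to\mathbb{S}_{p^n}$ reduction mod $p^n$. For $s\in\mathbb{S}_{p^n}$, $t\in\mathbb{S}_{p^n}(h)$: $D(s,t)=\lfloor(\mathfrak{b}(s)+t-h)/p^n\rfloor$, $H(s,t)=h+r(\mathfrak{b}(s)+t-h)$, $d(s)=D(s,b)$, $w(s)=\min\{d(u)-d(u-s):u\in\mathbb{S}_{p^n},u\succeq s\}$, and, when $s\preceq\mathfrak{a}(t)$, $\epsilon(s,t)=D(s,t)-w(s)$. *)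

theory Defs
  imports Main "HOL-Library.Extended_Nat" "HOL-Computational_Algebra.Primes"
begin

text \<open>L is modelled as a field type 'L; K is a subfield of L given as a set;
  v is the normalized valuation v_L on the nonzero elements of L (its value at 0
  is irrelevant; every statement about v x is guarded by x \<noteq> 0).\<close>

definition subfield_of :: "'L::field set \<Rightarrow> bool" where
  "subfield_of K \<longleftrightarrow> 0 \<in> K \<and> 1 \<in> K \<and>
     (\<forall>x\<in>K. \<forall>y\<in>K. x + y \<in> K \<and> x * y \<in> K) \<and>
     (\<forall>x\<in>K. - x \<in> K \<and> inverse x \<in> K)"

definition normalized_discrete_valuation :: "('L::field \<Rightarrow> int) \<Rightarrow> bool" where
  "normalized_discrete_valuation v \<longleftrightarrow>
     (\<forall>x y. x \<noteq> 0 \<longrightarrow> y \<noteq> 0 \<longrightarrow> v (x * y) = v x + v y) \<and>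
     (\<forall>x y. x \<noteq> 0 \<longrightarrow> y \<noteq> 0 \<longrightarrow> x + y \<noteq> 0 \<longrightarrow> min (v x) (v y) \<le> v (x + y)) \<and>
     (\<exists>x. x \<noteq> 0 \<and> v x = 1)"

definition complete_subfield :: "'L::field set \<Rightarrow> ('L \<Rightarrow> int) \<Rightarrow> bool" where
  "complete_subfield K v \<longleftrightarrow>
     (\<forall>x::nat \<Rightarrow> 'L. (\<forall>m. x m \<in> K) \<longrightarrow>
        (\<forall>N::int. \<exists>M. \<forall>m\<ge>M. \<forall>k\<ge>M. x m - x k = 0 \<or> N \<le> v (x m - x k)) \<longrightarrow>
        (\<exists>l\<in>K. \<forall>N::int. \<exists>M. \<forall>m\<ge>M. x m - l = 0 \<or> N \<le> v (x m - l)))"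

definition K_independent :: "'L::field set \<Rightarrow> ('L \<Rightarrow> 'b::ring_1) \<Rightarrow> 'b set \<Rightarrow> bool" where
  "K_independent K alg B \<longleftrightarrow>
     (\<forall>c. (\<forall>x\<in>B. c x \<in> K) \<longrightarrow> (\<Sum>x\<in>B. alg (c x) * x) = 0 \<longrightarrow> (\<forall>x\<in>B. c x = 0))"

definition K_spanning :: "'L::field set \<Rightarrow> ('L \<Rightarrow> 'b::ring_1) \<Rightarrow> 'b set \<Rightarrow> bool" where
  "K_spanning K alg B \<longleftrightarrow>
     (\<forall>a. \<exists>c. (\<forall>x\<in>B. c x \<in> K) \<and> a = (\<Sum>x\<in>B. alg (c x) * x))"

definition has_K_dim :: "'L::field set \<Rightarrow> ('L \<Rightarrow> 'b::ring_1) \<Rightarrow> nat \<Rightarrow> bool" where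
  "has_K_dim K alg d \<longleftrightarrow>
     (\<exists>B. finite B \<and> card B = d \<and> K_independent K alg B \<and> K_spanning K alg B)"

text \<open>Standing assumptions: K complete discretely valued with residue characteristic p,
  L/K totally ramified of degree p^n, v = v_L normalized, v_K = v_L / p^n,
  \<pi> a uniformizer of K.\<close>
definition extension_setting ::
  "'L::field set \<Rightarrow> ('L \<Rightarrow> int) \<Rightarrow> nat \<Rightarrow> nat \<Rightarrow> 'L \<Rightarrow> bool" where
  "extension_setting K v p n \<pi> \<longleftrightarrow>
     prime p \<and> subfield_of K \<and> normalized_discrete_valuation v \<and>
     complete_subfield K v \<and>
     (of_nat p = (0::'L) \<or> 1 \<le> v (of_nat p)) \<and>
     has_K_dim K (\<lambda>x. x) (p ^ n) \<and>
     (\<forall>x\<in>K. x \<noteq> 0 \<longrightarrow> int (p ^ n) dvd v x) \<and>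
     \<pi> \<in> K \<and> \<pi> \<noteq> 0 \<and> v \<pi> = int (p ^ n)"

definition algebra_action ::
  "'L::field set \<Rightarrow> nat \<Rightarrow> ('L \<Rightarrow> 'A::ring_1) \<Rightarrow> ('A \<Rightarrow> 'L \<Rightarrow> 'L) \<Rightarrow> bool" where
  "algebra_action K N alg act \<longleftrightarrow>
     (\<forall>x\<in>K. \<forall>y\<in>K. alg (x + y) = alg x + alg y \<and> alg (x * y) = alg x * alg y) \<and>
     alg 1 = 1 \<and>
     (\<forall>x\<in>K. \<forall>a. alg x * a = a * alg x) \<and>
     has_K_dim K alg N \<and>
     (\<forall>a b x. act (a + b) x = act a x + act b x) \<and>
     (\<forall>a b x. act (a * b) x = act a (act b x)) \<and>
     (\<forall>x. act 1 x = x) \<and>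
     (\<forall>a x y. act a (x + y) = act a x + act a y) \<and>
     (\<forall>c\<in>K. \<forall>a x. act a (c * x) = c * act a x) \<and>
     (\<forall>c\<in>K. \<forall>x. act (alg c) x = c * x)"

definition unitsOK :: "'L::field set \<Rightarrow> ('L \<Rightarrow> int) \<Rightarrow> 'L set" where
  "unitsOK K v = {u. u \<in> K \<and> u \<noteq> 0 \<and> v u = 0}"

text \<open>x \<equiv> y  (mod m \<P>_L^T), T possibly \<infinity> (then equality). m is nonzero.\<close>
definition cong_T :: "('L::field \<Rightarrow> int) \<Rightarrow> enat \<Rightarrow> 'L \<Rightarrow> 'L \<Rightarrow> 'L \<Rightarrow> bool" where
  "cong_T v T x y m \<longleftrightarrow>
     (case T of \<infinity> \<Rightarrow> x = y
              | enat k \<Rightarrow> x - y = 0 \<or> v m + int k \<le> v (x - y))"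

definition val_ge_T :: "('L::field \<Rightarrow> int) \<Rightarrow> 'L \<Rightarrow> int \<Rightarrow> enat \<Rightarrow> bool" where
  "val_ge_T v x c T \<longleftrightarrow>
     (case T of \<infinity> \<Rightarrow> x = 0 | enat k \<Rightarrow> x = 0 \<or> c + int k \<le> v x)"

definition digit :: "nat \<Rightarrow> nat \<Rightarrow> nat \<Rightarrow> nat" where
  "digit p j s = (s div p ^ j) mod p"

definition prec :: "nat \<Rightarrow> nat \<Rightarrow> nat \<Rightarrow> nat \<Rightarrow> bool" where
  "prec p n s t \<longleftrightarrow> (\<forall>j<n. digit p j s \<le> digit p j t)"

definition frakb :: "nat \<Rightarrow> nat \<Rightarrow> (nat \<Rightarrow> int) \<Rightarrow> nat \<Rightarrow> int" where
  "frakb p n bs s = (\<Sum>i=1..n. int (digit p (n - i) s) * int p ^ (n - i) * bs i)"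

definition fraka :: "nat \<Rightarrow> nat \<Rightarrow> (nat \<Rightarrow> int) \<Rightarrow> int \<Rightarrow> nat" where
  "fraka p n bs t = (THE u. u < p ^ n \<and> frakb p n bs u mod int (p ^ n) = (- t) mod int (p ^ n))"

text \<open>The unique b \<in> S_{p^n}(h) with a(b) = p^n - 1.\<close>
definition bpt :: "nat \<Rightarrow> nat \<Rightarrow> (nat \<Rightarrow> int) \<Rightarrow> int \<Rightarrow> int" where
  "bpt p n bs h = (THE x. h \<le> x \<and> x < h + int (p ^ n) \<and> fraka p n bs x = p ^ n - 1)"

definition Dfun :: "nat \<Rightarrow> nat \<Rightarrow> (nat \<Rightarrow> int) \<Rightarrow> int \<Rightarrow> nat \<Rightarrow> int \<Rightarrow> int" where
  "Dfun p n bs h s t = (frakb p n bs s + t - h) div int (p ^ n)"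

definition Hfun :: "nat \<Rightarrow> nat \<Rightarrow> (nat \<Rightarrow> int) \<Rightarrow> int \<Rightarrow> nat \<Rightarrow> int \<Rightarrow> int" where
  "Hfun p n bs h s t = h + (frakb p n bs s + t - h) mod int (p ^ n)"

definition dfun :: "nat \<Rightarrow> nat \<Rightarrow> (nat \<Rightarrow> int) \<Rightarrow> int \<Rightarrow> nat \<Rightarrow> int" where
  "dfun p n bs h s = Dfun p n bs h s (bpt p n bs h)"

definition wfun :: "nat \<Rightarrow> nat \<Rightarrow> (nat \<Rightarrow> int) \<Rightarrow> int \<Rightarrow> nat \<Rightarrow> int" where
  "wfun p n bs h s =
     Min {dfun p n bs h u - dfun p n bs h (u - s) | u. u < p ^ n \<and> prec p n s u}"

definition epsfun :: "nat \<Rightarrow> nat \<Rightarrow> (nat \<Rightarrow> int) \<Rightarrow> int \<Rightarrow> nat \<Rightarrow> int \<Rightarrow> int" where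
  "epsfun p n bs h s t = Dfun p n bs h s t - wfun p n bs h s"

definition scaffold ::
  "'L::field set \<Rightarrow> ('L \<Rightarrow> int) \<Rightarrow> ('A::ring_1 \<Rightarrow> 'L \<Rightarrow> 'L) \<Rightarrow> nat \<Rightarrow> nat \<Rightarrow> (nat \<Rightarrow> int)
     \<Rightarrow> enat \<Rightarrow> (int \<Rightarrow> 'L) \<Rightarrow> (nat \<Rightarrow> 'A) \<Rightarrow> bool" where
  "scaffold K v act p n bs T lam Psi \<longleftrightarrow>
     1 \<le> T \<and>
     (\<forall>i\<in>{1..n}. coprime (bs i) (int p)) \<and>
     (\<forall>t. lam t \<noteq> 0 \<and> v (lam t) = t) \<and>
     (\<forall>t1 t2. t1 mod int (p ^ n) = t2 mod int (p ^ n) \<longrightarrow> lam t1 / lam t2 \<in> K) \<and>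
     (\<forall>i\<in>{1..n}. act (Psi i) 1 = 0) \<and>
     (\<forall>i\<in>{1..n}. \<forall>t. \<exists>u\<in>unitsOK K v.
        cong_T v T (act (Psi i) (lam t))
          (if 1 \<le> digit p (n - i) (fraka p n bs t)
           then u * lam (t + int p ^ (n - i) * bs i) else 0)
          (lam (t + int p ^ (n - i) * bs i)))"

text \<open>\<Upsilon>^(s): words (lists of indices in {1..n}) in which \<Psi>_i occurs s_{(n-i)} times;
  the element of A is the (ordered) product.\<close>
definition Upsilon :: "nat \<Rightarrow> nat \<Rightarrow> (nat \<Rightarrow> 'A::ring_1) \<Rightarrow> nat \<Rightarrow> 'A set" where
  "Upsilon p n Psi s =
     {prod_list (map Psi w) | w. set w \<subseteq> {1..n} \<and>
        (\<forall>i\<in>{1..n}. count_list w i = digit p (n - i) s)}"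

end

theory Submission
  imports Defs
begin


definition geV :: "('L::field \<Rightarrow> int) \<Rightarrow> int \<Rightarrow> 'L \<Rightarrow> bool" where
  "geV v M x \<longleftrightarrow> x = 0 \<or> M \<le> v x"

locale valn =
  fixes v :: "'L::field \<Rightarrow> int"
  assumes nv: "normalized_discrete_valuation v"
begin

lemma v_mult: "x \<noteq> 0 \<Longrightarrow> y \<noteq> 0 \<Longrightarrow> v (x * y) = v x + v y"
  using nv unfolding normalized_discrete_valuation_def by blast

lemma v_add: "x \<noteq> 0 \<Longrightarrow> y \<noteq> 0 \<Longrightarrow> x + y \<noteq> 0 \<Longrightarrow> min (v x) (v y) \<le> v (x + y)"
  using nv unfolding normalized_discrete_valuation_def by blast

lemma v_one: "v 1 = 0"
  using v_mult[of 1 1] by simp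

lemma v_m1: "v (-1) = 0"
  using v_mult[of "-1" "-1"] v_one by simp

lemma v_minus: "x \<noteq> 0 \<Longrightarrow> v (- x) = v x"
  using v_mult[of "-1" x] v_m1 by simp

lemma v_inverse: "x \<noteq> 0 \<Longrightarrow> v (inverse x) = - v x"
  using v_mult[of x "inverse x"] v_one by simp

lemma v_divide: "x \<noteq> 0 \<Longrightarrow> y \<noteq> 0 \<Longrightarrow> v (x / y) = v x - v y"
  by (simp add: divide_inverse v_mult v_inverse)

lemma geV_add: "geV v M x \<Longrightarrow> geV v M y \<Longrightarrow> geV v M (x + y)"
  unfolding geV_def
proof -
  assume a: "x = 0 \<or> M \<le> v x" "y = 0 \<or> M \<le> v y"
  show "x + y = 0 \<or> M \<le> v (x + y)"
  proof (cases "x = 0 \<or> y = 0 \<or> x + y = 0")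
    case True then show ?thesis using a by auto
  next
    case False
    then show ?thesis using a v_add[of x y] by auto
  qed
qed

lemma geV_0[simp]: "geV v M 0" by (simp add: geV_def)

lemma geV_mono: "geV v M x \<Longrightarrow> M' \<le> M \<Longrightarrow> geV v M' x"
  unfolding geV_def by auto

lemma geV_sum: "finite F \<Longrightarrow> (\<And>k. k \<in> F \<Longrightarrow> geV v M (f k)) \<Longrightarrow> geV v M (\<Sum>k\<in>F. f k)"
  by (induction F rule: finite_induct) (auto intro: geV_add)

lemma geV_mult: "geV v M x \<Longrightarrow> c \<noteq> 0 \<Longrightarrow> geV v (v c + M) (c * x)"
  unfolding geV_def using v_mult by force

lemma geV_minus: "geV v M x \<Longrightarrow> geV v M (- x)"
  unfolding geV_def using v_minus by force

lemma geV_diff: "geV v M x \<Longrightarrow> geV v M y \<Longrightarrow> geV v M (x - y)"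
  using geV_add[of M x "- y"] geV_minus by simp

lemma v_strict:
  assumes "x \<noteq> 0" "y \<noteq> 0" "v x < v y"
  shows "x + y \<noteq> 0 \<and> v (x + y) = v x"
proof
  show xy: "x + y \<noteq> 0"
  proof
    assume "x + y = 0" then have "y = - x" by (metis add.commute neg_eq_iff_add_eq_0)
    then show False using assms v_minus by auto
  qed
  have "min (v x) (v y) \<le> v (x + y)" using v_add assms xy by blast
  moreover have "min (v (x+y)) (v (-y)) \<le> v ((x + y) + (- y))"
  proof (cases "x + y + - y = 0")
    case True then show ?thesis using assms by simp
  next
    case False then show ?thesis using v_add[of "x+y" "-y"] xy assms by auto
  qed
  ultimately show "v (x + y) = v x" using assms v_minus by auto
qed

lemma sum_distinct_val:
  assumes "finite F" "F \<noteq> {}" "\<And>k. k \<in> F \<Longrightarrow> f k \<noteq> 0" "inj_on (\<lambda>k. v (f k)) F"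
  shows "(\<Sum>k\<in>F. f k) \<noteq> 0 \<and> v (\<Sum>k\<in>F. f k) = Min ((\<lambda>k. v (f k)) ` F)"
  using assms
proof (induction F rule: finite_ne_induct)
  case (singleton x) then show ?case by simp
next
  case (insert a F)
  have IH: "(\<Sum>k\<in>F. f k) \<noteq> 0" "v (\<Sum>k\<in>F. f k) = Min ((\<lambda>k. v (f k)) ` F)"
    using insert by (auto simp: inj_on_insert)
  obtain k0 where k0: "k0 \<in> F" "Min ((\<lambda>k. v (f k)) ` F) = v (f k0)"
    using Min_in[of "(\<lambda>k. v (f k)) ` F"] insert by (metis (no_types, lifting) finite_imageI image_iff image_is_empty)
  have ne: "v (f a) \<noteq> v (f k0)" using insert k0 by (auto simp: inj_on_def)
  have sa: "(\<Sum>k\<in>insert a F. f k) = f a + (\<Sum>k\<in>F. f k)" using insert by simp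
  have mi: "Min ((\<lambda>k. v (f k)) ` insert a F) = min (v (f a)) (v (f k0))"
    using insert k0 by (simp add: Min_insert)
  show ?case
  proof (cases "v (f a) < v (f k0)")
    case True
    then show ?thesis using v_strict[of "f a" "\<Sum>k\<in>F. f k"] IH k0 insert sa mi by auto
  next
    case False
    then have "v (f k0) < v (f a)" using ne by auto
    then show ?thesis using v_strict[of "\<Sum>k\<in>F. f k" "f a"] IH k0 insert sa mi
      by (auto simp: add.commute)
  qed
qed

end


definition spanK :: "'L::field set \<Rightarrow> 'L set \<Rightarrow> 'L \<Rightarrow> bool" where
  "spanK K B y \<longleftrightarrow> (\<exists>c. (\<forall>x\<in>B. c x \<in> K) \<and> y = (\<Sum>x\<in>B. c x * x))"

locale subf =
  fixes K :: "'L::field set"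
  assumes sf: "subfield_of K"
begin

lemma K0[simp]: "0 \<in> K" and K1[simp]: "1 \<in> K"
  using sf unfolding subfield_of_def by auto
lemma Kadd[intro]: "x \<in> K \<Longrightarrow> y \<in> K \<Longrightarrow> x + y \<in> K"
  using sf unfolding subfield_of_def by auto
lemma Kmult[intro]: "x \<in> K \<Longrightarrow> y \<in> K \<Longrightarrow> x * y \<in> K"
  using sf unfolding subfield_of_def by auto
lemma Kminus[intro]: "x \<in> K \<Longrightarrow> - x \<in> K"
  using sf unfolding subfield_of_def by auto
lemma Kinv[intro]: "x \<in> K \<Longrightarrow> inverse x \<in> K"
  using sf unfolding subfield_of_def by auto
lemma Kdiff[intro]: "x \<in> K \<Longrightarrow> y \<in> K \<Longrightarrow> x - y \<in> K"
  using Kadd[of x "- y"] Kminus by simp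
lemma Kdiv[intro]: "x \<in> K \<Longrightarrow> y \<in> K \<Longrightarrow> x / y \<in> K"
  by (simp add: divide_inverse Kmult Kinv)
lemma Ksum[intro]: "finite F \<Longrightarrow> (\<And>k. k \<in> F \<Longrightarrow> f k \<in> K) \<Longrightarrow> (\<Sum>k\<in>F. f k) \<in> K"
  by (induction F rule: finite_induct) auto
lemma Kpow[intro]: "x \<in> K \<Longrightarrow> x ^ m \<in> K"
  by (induction m) auto
lemma Kpowi[intro]: "x \<in> K \<Longrightarrow> x powi z \<in> K"
  by (auto simp: power_int_def)

lemma span_add: "finite B \<Longrightarrow> spanK K B x \<Longrightarrow> spanK K B y \<Longrightarrow> spanK K B (x + y)"
  unfolding spanK_def
proof -
  assume "finite B" "\<exists>c. (\<forall>x\<in>B. c x \<in> K) \<and> x = (\<Sum>x\<in>B. c x * x)"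
     "\<exists>c. (\<forall>x\<in>B. c x \<in> K) \<and> y = (\<Sum>x\<in>B. c x * x)"
  then obtain c d where "\<forall>x\<in>B. c x \<in> K" "x = (\<Sum>x\<in>B. c x * x)"
    "\<forall>x\<in>B. d x \<in> K" "y = (\<Sum>x\<in>B. d x * x)" by blast
  then show "\<exists>e. (\<forall>x\<in>B. e x \<in> K) \<and> x + y = (\<Sum>x\<in>B. e x * x)"
    by (intro exI[of _ "\<lambda>z. c z + d z"]) (auto simp: sum.distrib distrib_right)
qed

lemma span_scale: "spanK K B x \<Longrightarrow> a \<in> K \<Longrightarrow> spanK K B (a * x)"
  unfolding spanK_def
proof -
  assume "\<exists>c. (\<forall>x\<in>B. c x \<in> K) \<and> x = (\<Sum>x\<in>B. c x * x)" "a \<in> K"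
  then obtain c where "\<forall>x\<in>B. c x \<in> K" "x = (\<Sum>x\<in>B. c x * x)" by blast
  then show "\<exists>e. (\<forall>x\<in>B. e x \<in> K) \<and> a * x = (\<Sum>x\<in>B. e x * x)"
    using \<open>a \<in> K\<close> by (intro exI[of _ "\<lambda>z. a * c z"]) (auto simp: sum_distrib_left mult.assoc)
qed

lemma span_diff: "finite B \<Longrightarrow> spanK K B x \<Longrightarrow> spanK K B y \<Longrightarrow> spanK K B (x - y)"
  using span_add[of B x "(-1) * y"] span_scale[of B y "-1"] Kminus[OF K1] by auto

lemma span_empty: "spanK K {} y \<Longrightarrow> y = 0"
  unfolding spanK_def by auto

lemma dependent_lemma:
  assumes "finite B"
  shows "\<And>J w. finite J \<Longrightarrow> card B < card J \<Longrightarrow> (\<forall>j\<in>J. spanK K B (w j)) \<Longrightarrow>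
     \<exists>c. (\<forall>j\<in>J. c j \<in> K) \<and> (\<Sum>j\<in>J. c j * w j) = 0 \<and> (\<exists>j\<in>J. c j \<noteq> 0)"
  using assms
proof (induction B rule: finite_induct)
  case empty
  then obtain j0 where j0: "j0 \<in> J" by (metis card.empty card_gt_0_iff ex_in_conv)
  have "\<forall>j\<in>J. w j = 0" using empty span_empty by blast
  then show ?case using j0
    by (intro exI[of _ "\<lambda>j. if j = j0 then 1 else 0"]) auto
next
  case (insert b B J w)
  have "\<forall>j\<in>J. \<exists>a r. a \<in> K \<and> spanK K B r \<and> w j = a * b + r"
  proof
    fix j assume "j \<in> J"
    then obtain c where c: "\<forall>x\<in>insert b B. c x \<in> K" "w j = (\<Sum>x\<in>insert b B. c x * x)"
      using insert unfolding spanK_def by blast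
    then have "w j = c b * b + (\<Sum>x\<in>B. c x * x)" using insert by simp
    moreover have "spanK K B (\<Sum>x\<in>B. c x * x)" unfolding spanK_def using c by auto
    ultimately show "\<exists>a r. a \<in> K \<and> spanK K B r \<and> w j = a * b + r" using c by blast
  qed
  then obtain a r where ar: "\<And>j. j \<in> J \<Longrightarrow> a j \<in> K \<and> spanK K B (r j) \<and> w j = a j * b + r j"
    by metis
  show ?case
  proof (cases "\<forall>j\<in>J. a j = 0")
    case True
    then have "\<forall>j\<in>J. spanK K B (w j)" using ar by auto
    moreover have "card B < card J" using insert by simp
    ultimately show ?thesis using insert.IH[of J w] insert by blast
  next
    case False
    then obtain j0 where j0: "j0 \<in> J" "a j0 \<noteq> 0" by blast
    define J' where "J' = J - {j0}"
    define w' where "w' j = w j - (a j / a j0) * w j0" for j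
    have cJ: "card J' = card J - 1" using j0 insert unfolding J'_def by simp
    have fJ: "finite J'" using insert unfolding J'_def by simp
    have "card B < card J'" using cJ insert by simp
    moreover have "\<forall>j\<in>J'. spanK K B (w' j)"
    proof
      fix j assume j: "j \<in> J'"
      have "w' j = r j - (a j / a j0) * r j0"
        using ar[of j] ar[of j0] j j0 unfolding w'_def J'_def by (simp add: field_simps)
      moreover have "spanK K B ((a j / a j0) * r j0)"
        using ar[of j] ar[of j0] j j0 unfolding J'_def by (intro span_scale) auto
      ultimately show "spanK K B (w' j)" using span_diff insert ar[of j] j unfolding J'_def by auto
    qed
    ultimately obtain c' where c': "\<forall>j\<in>J'. c' j \<in> K" "(\<Sum>j\<in>J'. c' j * w' j) = 0" "\<exists>j\<in>J'. c' j \<noteq> 0"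
      using insert.IH[of J' w'] fJ by blast
    define c where "c j = (if j = j0 then - (\<Sum>i\<in>J'. c' i * (a i / a j0)) else c' j)" for j
    have cK: "\<forall>j\<in>J. c j \<in> K"
      using c' ar j0 insert.prems(1) unfolding c_def J'_def by (auto intro!: Ksum Kmult Kdiv Kminus)
    have JJ: "J = insert j0 J'" "j0 \<notin> J'" using j0 unfolding J'_def by auto
    have "(\<Sum>j\<in>J. c j * w j) = c j0 * w j0 + (\<Sum>j\<in>J'. c j * w j)"
      using JJ fJ by simp
    also have "(\<Sum>j\<in>J'. c j * w j) = (\<Sum>j\<in>J'. c' j * w j)"
      using JJ unfolding c_def by (intro sum.cong) auto
    also have "c j0 * w j0 = - (\<Sum>i\<in>J'. c' i * (a i / a j0) * w j0)"
      unfolding c_def by (simp add: sum_distrib_right)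
    also have "- (\<Sum>i\<in>J'. c' i * (a i / a j0) * w j0) + (\<Sum>j\<in>J'. c' j * w j)
        = (\<Sum>j\<in>J'. c' j * w' j)"
      unfolding w'_def by (simp add: sum_subtractf[symmetric] algebra_simps)
    finally have "(\<Sum>j\<in>J. c j * w j) = 0" using c' by simp
    moreover have "\<exists>j\<in>J. c j \<noteq> 0" using c' JJ unfolding c_def by auto
    ultimately show ?thesis using cK by blast
  qed
qed

end


lemma sub_div_nat: "m * b \<le> (x::nat) \<Longrightarrow> (x - m * b) div b = x div b - m"
proof (cases "b = 0")
  case False
  assume a: "m * b \<le> x"
  have "x = (x - m*b) + m * b" using a by simp
  moreover have "((x - m*b) + m * b) div b = (x - m*b) div b + m" using False by simp
  ultimately have "x div b = (x - m*b) div b + m" by simp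
  then show ?thesis by simp
qed simp

lemma digit_sub:
  assumes p: "(p::nat) \<ge> 2" and d: "1 \<le> digit p k u"
  shows "digit p j (u - p ^ k) = (if j = k then digit p j u - 1 else digit p j u)"
proof -
  have ppos: "p > 0" using p by simp
  have uk: "p ^ k \<le> u"
  proof (rule ccontr)
    assume "\<not> p ^ k \<le> u" then have "u div p ^ k = 0" by simp
    then show False using d unfolding digit_def by simp
  qed
  consider "j < k" | "j = k" | "j > k" by linarith
  then show ?thesis
  proof cases
    case 1
    have pk: "p ^ k = p ^ (k - j) * p ^ j" using 1 by (simp add: power_add[symmetric])
    have le: "p ^ (k - j) * p ^ j \<le> u" using uk pk by simp
    have "(u - p ^ k) div p ^ j = u div p ^ j - p ^ (k - j)"
      using sub_div_nat[OF le] pk by simp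
    moreover have "p ^ (k - j) \<le> u div p ^ j"
      using le ppos by (simp add: less_eq_div_iff_mult_less_eq)
    moreover have "p dvd p ^ (k - j)" using 1 by simp
    ultimately have "((u - p ^ k) div p ^ j) mod p = (u div p ^ j) mod p"
    proof -
      assume e: "(u - p ^ k) div p ^ j = u div p ^ j - p ^ (k - j)"
        and m: "p ^ (k - j) \<le> u div p ^ j" and dd: "p dvd p ^ (k - j)"
      obtain z where z: "p ^ (k - j) = p * z" using dd by blast
      have "u div p ^ j = (u div p ^ j - p ^ (k - j)) + p * z" using m z by simp
      moreover have "((u div p ^ j - p ^ (k - j)) + p * z) mod p = (u div p ^ j - p ^ (k - j)) mod p"
        by simp
      ultimately have "(u div p ^ j) mod p = (u div p ^ j - p ^ (k - j)) mod p"
        by simp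
      then show ?thesis using e by simp
    qed
    then show ?thesis using 1 unfolding digit_def by simp
  next
    case 2
    have "(u - p ^ k) div p ^ k = u div p ^ k - 1"
      using sub_div_nat[of 1 "p^k" u] uk by simp
    moreover have "(Q - 1) mod p = Q mod p - 1" if "Q mod p \<ge> 1" for Q :: nat
    proof -
      have "Q = p * (Q div p) + Q mod p" by simp
      then have "Q - 1 = p * (Q div p) + (Q mod p - 1)" using that by linarith
      moreover have "(p * (Q div p) + (Q mod p - 1)) mod p = (Q mod p - 1) mod p" by simp
      ultimately have "(Q - 1) mod p = (Q mod p - 1) mod p" by simp
      also have "\<dots> = Q mod p - 1" using ppos mod_less_divisor[OF ppos, of Q] by simp
      finally show ?thesis .
    qed
    ultimately show ?thesis using 2 d unfolding digit_def by simp
  next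
    case 3
    have dv: "p ^ Suc k dvd p ^ j" using 3 by (intro le_imp_power_dvd) simp
    have "u mod p ^ Suc k = p ^ k * (u div p ^ k mod p) + u mod p ^ k"
      using mod_mult2_eq[of u "p ^ k" p] by (simp add: mult.commute)
    moreover have "p ^ k \<le> p ^ k * (u div p ^ k mod p)" using d unfolding digit_def by simp
    ultimately have "u mod p ^ Suc k \<ge> p ^ k" by linarith
    moreover have "u mod p ^ j mod p ^ Suc k = u mod p ^ Suc k"
      using dv by (simp add: mod_mod_cancel)
    moreover have "u mod p ^ j mod p ^ Suc k \<le> u mod p ^ j" by (rule mod_less_eq_dividend)
    ultimately have R: "u mod p ^ j \<ge> p ^ k" by linarith
    have "u = p ^ j * (u div p ^ j) + u mod p ^ j" by simp
    have "u - p ^ k = (u mod p ^ j - p ^ k) + (u div p ^ j) * p ^ j"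
      using R div_mult_mod_eq[of u "p^j"] by linarith
    moreover have "u mod p ^ j - p ^ k < p ^ j" using ppos
      by (meson diff_le_self le_less_trans mod_less_divisor zero_less_power)
    ultimately have "(u - p ^ k) div p ^ j = u div p ^ j"
    proof -
      assume e: "u - p ^ k = (u mod p ^ j - p ^ k) + (u div p ^ j) * p ^ j"
        and l: "u mod p ^ j - p ^ k < p ^ j"
      have nz: "p ^ j \<noteq> 0" using ppos by simp
      have "(u - p ^ k) div p ^ j = u div p ^ j + (u mod p ^ j - p ^ k) div p ^ j"
        using e div_mult_self1[OF nz, of "u mod p ^ j - p ^ k" "u div p ^ j"] by simp
      then show ?thesis using l by simp
    qed
    then show ?thesis using 3 unfolding digit_def by simp
  qed
qed



lemma digits_eq_mod:
  "(\<forall>j<m. digit p j u = digit p j u') \<Longrightarrow> u mod p ^ m = u' mod p ^ m"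
proof (induction m)
  case 0 then show ?case by simp
next
  case (Suc m)
  have e: "x mod p ^ Suc m = p ^ m * digit p m x + x mod p ^ m" for x
    using mod_mult2_eq[of x "p ^ m" p] by (simp add: mult.commute digit_def)
  show ?case using Suc by (simp only: e) simp
qed

locale comb =
  fixes p n :: nat and bs :: "nat \<Rightarrow> int"
  assumes pp: "prime p"
    and cop: "\<forall>i\<in>{1..n}. coprime (bs i) (int p)"
begin

lemma p2: "p \<ge> 2" using pp prime_ge_2_nat by blast
lemma Npos: "p ^ n > 0" using p2 by simp

lemma digit_lt: "digit p j u < p"
  unfolding digit_def using p2 by simp

lemma frakb_inj:
  assumes u: "u < p ^ n" and u': "u' < p ^ n"
    and eq: "frakb p n bs u mod int (p ^ n) = frakb p n bs u' mod int (p ^ n)"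
  shows "u = u'"
proof (rule ccontr)
  assume ne: "u \<noteq> u'"
  define D where "D = {i\<in>{1..n}. digit p (n - i) u \<noteq> digit p (n - i) u'}"
  have "D \<noteq> {}"
  proof
    assume "D = {}"
    have "\<forall>j<n. digit p j u = digit p j u'"
    proof (intro allI impI)
      fix j assume j: "j < n"
      then have "n - j \<in> {1..n}" by auto
      moreover have "n - j \<notin> D" using \<open>D = {}\<close> by simp
      ultimately have "digit p (n - (n - j)) u = digit p (n - (n - j)) u'" unfolding D_def by blast
      then show "digit p j u = digit p j u'" using j by simp
    qed
    then have "u mod p ^ n = u' mod p ^ n" by (rule digits_eq_mod)
    then show False using u u' ne by simp
  qed
  moreover have fD: "finite D" unfolding D_def by simp
  ultimately have i0D: "Max D \<in> D" by simp
  define i0 where "i0 = Max D"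
  have i0: "i0 \<in> {1..n}" "digit p (n - i0) u \<noteq> digit p (n - i0) u'"
    using i0D unfolding i0_def D_def by auto
  have above: "digit p (n - i) u = digit p (n - i) u'" if "i \<in> {1..n}" "i > i0" for i
  proof (rule ccontr)
    assume "digit p (n - i) u \<noteq> digit p (n - i) u'"
    then have "i \<in> D" using that unfolding D_def by auto
    then show False using that fD unfolding i0_def by (meson Max_ge leD)
  qed
  define m where "m = n - i0"
  have mn: "m < n" using i0 unfolding m_def by auto
  define e where "e i = int (digit p (n - i) u) - int (digit p (n - i) u')" for i
  define f where "f i = e i * int p ^ (n - i) * bs i" for i
  have "frakb p n bs u - frakb p n bs u' = (\<Sum>i\<in>{1..n}. int (digit p (n - i) u) * int p ^ (n - i) * bs i
       - int (digit p (n - i) u') * int p ^ (n - i) * bs i)"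
    unfolding frakb_def by (simp only: sum_subtractf)
  also have "\<dots> = (\<Sum>i\<in>{1..n}. f i)"
    unfolding f_def e_def by (intro sum.cong refl) (simp only: left_diff_distrib)
  finally have diff: "frakb p n bs u - frakb p n bs u' = (\<Sum>i\<in>{1..n}. f i)" .
  have "int p ^ Suc m dvd int p ^ n" using mn by (intro le_imp_power_dvd) simp
  moreover have "int (p ^ n) dvd frakb p n bs u - frakb p n bs u'"
    using eq by (simp add: mod_eq_dvd_iff)
  ultimately have d1: "int p ^ Suc m dvd (\<Sum>i\<in>{1..n}. f i)"
    using diff by (metis dvd_trans of_nat_power)
  have "(\<Sum>i\<in>{1..n}. f i) = f i0 + (\<Sum>i\<in>{1..n} - {i0}. f i)"
    using i0 by (intro sum.remove) auto
  moreover have "int p ^ Suc m dvd (\<Sum>i\<in>{1..n} - {i0}. f i)"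
  proof (rule dvd_sum)
    fix i assume i: "i \<in> {1..n} - {i0}"
    show "int p ^ Suc m dvd f i"
    proof (cases "i > i0")
      case True then show ?thesis using above[of i] i unfolding f_def e_def by simp
    next
      case False
      then have "Suc m \<le> n - i" using i i0 unfolding m_def by auto
      then have "int p ^ Suc m dvd int p ^ (n - i)" by (rule le_imp_power_dvd)
      then show ?thesis unfolding f_def by (intro dvd_mult2 dvd_mult)
    qed
  qed
  ultimately have "int p ^ Suc m dvd f i0" using d1 by (simp add: dvd_add_left_iff)
  moreover have "f i0 = int p ^ m * (e i0 * bs i0)" unfolding f_def m_def by (simp only: ac_simps)
  moreover have "int p ^ Suc m = int p ^ m * int p" by (rule power_Suc2)
  ultimately have "int p ^ m * int p dvd int p ^ m * (e i0 * bs i0)" by simp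
  moreover have "int p ^ m \<noteq> 0" using p2 by simp
  ultimately have "int p dvd e i0 * bs i0" using dvd_mult_cancel_left[of "int p ^ m" "int p" "e i0 * bs i0"] p2 by auto
  moreover have pi: "prime (int p)" using pp by simp
  moreover have "\<not> int p dvd bs i0"
  proof
    assume "int p dvd bs i0"
    moreover have "coprime (bs i0) (int p)" using cop i0(1) by blast
    ultimately have "is_unit (int p)" using coprime_common_divisor[of "bs i0" "int p" "int p"] by simp
    then show False using pi not_prime_unit by blast
  qed
  ultimately have "int p dvd e i0" by (simp add: prime_dvd_mult_iff)
  moreover have "\<bar>e i0\<bar> < int p" unfolding e_def using digit_lt[of "n - i0" u] digit_lt[of "n - i0" u'] by auto
  ultimately have "e i0 = 0"
  proof -
    assume a: "int p dvd e i0" "\<bar>e i0\<bar> < int p"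
    show "e i0 = 0"
    proof (rule ccontr)
      assume "e i0 \<noteq> 0"
      then have "\<bar>int p\<bar> \<le> \<bar>e i0\<bar>" using dvd_imp_le_int[of "e i0" "int p"] a(1) by blast
      then show False using a(2) by simp
    qed
  qed
  then show False using i0 unfolding e_def by simp
qed

lemma frakb_surj:
  "\<exists>u<p ^ n. frakb p n bs u mod int (p ^ n) = r mod int (p ^ n)"
proof -
  define phi where "phi u = frakb p n bs u mod int (p ^ n)" for u
  have "inj_on phi {..<p ^ n}" unfolding inj_on_def phi_def using frakb_inj by auto
  then have c: "card (phi ` {..<p ^ n}) = p ^ n" by (simp add: card_image)
  have sub: "phi ` {..<p ^ n} \<subseteq> {0..<int (p ^ n)}" unfolding phi_def using Npos by auto
  have cc: "card {0..<int (p ^ n)} = p ^ n"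
    by (metis card_atLeastLessThan_int diff_zero nat_int)
  have "phi ` {..<p ^ n} = {0..<int (p ^ n)}"
    by (rule card_subset_eq) (use c sub cc in auto)
  moreover have "r mod int (p ^ n) \<in> {0..<int (p ^ n)}" using Npos by auto
  ultimately have "r mod int (p ^ n) \<in> phi ` {..<p ^ n}" by simp
  then obtain u where "u \<in> {..<p ^ n}" "phi u = r mod int (p ^ n)" by (rule imageE) auto
  then show ?thesis unfolding phi_def by auto
qed

lemma fraka_spec: "fraka p n bs t < p ^ n \<and> frakb p n bs (fraka p n bs t) mod int (p ^ n) = (- t) mod int (p ^ n)"
proof -
  obtain u where u: "u < p ^ n" "frakb p n bs u mod int (p ^ n) = (- t) mod int (p ^ n)"
    using frakb_surj by blast
  have H: "\<And>x. x < p ^ n \<and> frakb p n bs x mod int (p ^ n) = (- t) mod int (p ^ n) \<Longrightarrow> x = u"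
  proof -
    fix x assume "x < p ^ n \<and> frakb p n bs x mod int (p ^ n) = (- t) mod int (p ^ n)"
    then show "x = u" using frakb_inj[of x u] u by simp
  qed
  have P: "u < p ^ n \<and> frakb p n bs u mod int (p ^ n) = (- t) mod int (p ^ n)" using u by simp
  show ?thesis unfolding fraka_def
    by (rule theI[where a=u and P="\<lambda>x. x < p ^ n \<and> frakb p n bs x mod int (p ^ n) = (- t) mod int (p ^ n)", OF P H])
qed

lemma fraka_eq:
  assumes "u < p ^ n" "frakb p n bs u mod int (p ^ n) = (- t) mod int (p ^ n)"
  shows "fraka p n bs t = u"
  using fraka_spec[of t] assms frakb_inj[of "fraka p n bs t" u] by simp

end


context comb begin

lemma frakb_sub:
  assumes i: "i \<in> {1..n}" and d: "1 \<le> digit p (n - i) u"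
  shows "frakb p n bs (u - p ^ (n - i)) = frakb p n bs u - int p ^ (n - i) * bs i"
proof -
  have dg: "int (digit p (n - i') (u - p ^ (n - i))) = int (digit p (n - i') u) - (if i' = i then 1 else 0)"
    if "i' \<in> {1..n}" for i'
  proof -
    have "(n - i' = n - i) = (i' = i)" using that i by auto
    then show ?thesis using digit_sub[OF p2 d, of "n - i'"] d by auto
  qed
  have "frakb p n bs (u - p ^ (n - i)) = (\<Sum>i'\<in>{1..n}. int (digit p (n - i') u) * int p ^ (n - i') * bs i'
      - (if i' = i then int p ^ (n - i') * bs i' else 0))"
    unfolding frakb_def by (intro sum.cong refl) (simp add: dg left_diff_distrib)
  also have "\<dots> = frakb p n bs u - int p ^ (n - i) * bs i"
    unfolding frakb_def using i by (simp add: sum_subtractf)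
  finally show ?thesis .
qed

lemma fraka_shift:
  assumes i: "i \<in> {1..n}" and d: "1 \<le> digit p (n - i) (fraka p n bs t)"
  shows "fraka p n bs (t + int p ^ (n - i) * bs i) = fraka p n bs t - p ^ (n - i)"
proof (rule fraka_eq)
  show "fraka p n bs t - p ^ (n - i) < p ^ n" using fraka_spec[of t] by linarith
  have "frakb p n bs (fraka p n bs t - p ^ (n - i)) mod int (p ^ n)
     = (frakb p n bs (fraka p n bs t) - int p ^ (n - i) * bs i) mod int (p ^ n)"
    using frakb_sub[OF i d] by simp
  also have "\<dots> = ((- t) - int p ^ (n - i) * bs i) mod int (p ^ n)"
    using fraka_spec[of t] by (metis mod_diff_left_eq)
  also have "\<dots> = (- (t + int p ^ (n - i) * bs i)) mod int (p ^ n)" by (simp add: algebra_simps)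
  finally show "frakb p n bs (fraka p n bs t - p ^ (n - i)) mod int (p ^ n) =
      (- (t + int p ^ (n - i) * bs i)) mod int (p ^ n)" .
qed

lemma fraka_shift_digit:
  assumes i: "i \<in> {1..n}" and d: "1 \<le> digit p (n - i) (fraka p n bs t)"
  shows "digit p j (fraka p n bs (t + int p ^ (n - i) * bs i)) =
     (if j = n - i then digit p j (fraka p n bs t) - 1 else digit p j (fraka p n bs t))"
  using fraka_shift[OF i d] digit_sub[OF p2 d] by simp

lemma frakb_0: "frakb p n bs 0 = 0"
  unfolding frakb_def digit_def by simp

lemma fraka_mod: "fraka p n bs t1 = fraka p n bs t2 \<Longrightarrow> t1 mod int (p ^ n) = t2 mod int (p ^ n)"
proof -
  assume "fraka p n bs t1 = fraka p n bs t2"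
  then have "(- t1) mod int (p ^ n) = (- t2) mod int (p ^ n)" using fraka_spec[of t1] fraka_spec[of t2] by simp
  then have "(- t2) mod int (p ^ n) = (- t1) mod int (p ^ n)" by simp
  then have "int (p ^ n) dvd (- t2) - (- t1)" by (simp only: mod_eq_dvd_iff)
  then have "int (p ^ n) dvd t1 - t2" by simp
  then show ?thesis by (simp add: mod_eq_dvd_iff)
qed

lemma bpt_spec:
  "h \<le> bpt p n bs h \<and> bpt p n bs h < h + int (p ^ n) \<and> fraka p n bs (bpt p n bs h) = p ^ n - 1"
proof -
  define N where "N = int (p ^ n)"
  have Np: "N > 0" unfolding N_def using Npos by simp
  define c where "c = frakb p n bs (p ^ n - 1)"
  define x where "x = h + ((- c - h) mod N)"
  have x1: "h \<le> x" "x < h + N" unfolding x_def using Np by auto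
  have "(- x) mod N = c mod N"
  proof -
    have "N dvd (c - (- x))" unfolding x_def
    proof -
      have "(- c - h) mod N = (- c - h) - N * ((- c - h) div N)"
        using minus_div_mult_eq_mod[of "- c - h" N] by (simp add: mult.commute)
      then have "c - - (h + (- c - h) mod N) = N * (- ((- c - h) div N))" by simp
      then show "N dvd c - - (h + (- c - h) mod N)" by simp
    qed
    then have "N dvd (- x) - c" using dvd_diff_commute[of N c "- x"] by simp
    then show ?thesis by (simp add: mod_eq_dvd_iff)
  qed
  then have ax: "fraka p n bs x = p ^ n - 1"
    using Npos unfolding N_def c_def by (intro fraka_eq) auto
  have uniq: "y = x" if "h \<le> y \<and> y < h + N \<and> fraka p n bs y = p ^ n - 1" for y
  proof -
    have "y mod N = x mod N" using fraka_mod[of y x] that ax unfolding N_def by simp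
    then have "N dvd y - x" by (simp add: mod_eq_dvd_iff)
    moreover have "\<bar>y - x\<bar> < N" using that x1 by auto
    ultimately show "y = x"
    proof -
      assume a: "N dvd y - x" "\<bar>y - x\<bar> < N"
      show "y = x"
      proof (rule ccontr)
        assume "y \<noteq> x"
        then have "\<bar>N\<bar> \<le> \<bar>y - x\<bar>" using dvd_imp_le_int[of "y - x" N] a(1) by simp
        then show False using a(2) by simp
      qed
    qed
  qed
  have P: "h \<le> x \<and> x < h + int (p ^ n) \<and> fraka p n bs x = p ^ n - 1" using x1 ax unfolding N_def by simp
  show ?thesis unfolding bpt_def
    by (rule theI[where a=x and P="\<lambda>x. h \<le> x \<and> x < h + int (p ^ n) \<and> fraka p n bs x = p ^ n - 1", OF P])
       (use uniq in \<open>auto simp: N_def\<close>)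
qed

end


locale ctx =
  fixes K :: "'L::field set" and v :: "'L \<Rightarrow> int" and p n :: nat and \<pi> :: 'L
    and alg :: "'L \<Rightarrow> 'A::ring_1" and act :: "'A \<Rightarrow> 'L \<Rightarrow> 'L"
    and bs :: "nat \<Rightarrow> int" and T :: enat and lam :: "int \<Rightarrow> 'L" and Psi :: "nat \<Rightarrow> 'A"
  assumes setting: "extension_setting K v p n \<pi>"
    and alg_act: "algebra_action K (p ^ n) alg act"
    and scaf: "scaffold K v act p n bs T lam Psi"

sublocale ctx \<subseteq> valn v
  using setting unfolding extension_setting_def by unfold_locales blast
sublocale ctx \<subseteq> subf K
  using setting unfolding extension_setting_def by unfold_locales blast
sublocale ctx \<subseteq> comb p n bs
  using setting scaf unfolding extension_setting_def scaffold_def by unfold_locales blast+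

context ctx begin

abbreviation "N \<equiv> p ^ n"

lemma vK: "x \<in> K \<Longrightarrow> x \<noteq> 0 \<Longrightarrow> int N dvd v x"
  using setting unfolding extension_setting_def by blast
lemma pi_K: "\<pi> \<in> K" and pi_nz: "\<pi> \<noteq> 0" and v_pi: "v \<pi> = int N"
  using setting unfolding extension_setting_def by blast+
lemma T1: "1 \<le> T" using scaf unfolding scaffold_def by blast
lemma lam_nz: "lam t \<noteq> 0" and v_lam: "v (lam t) = t"
  using scaf unfolding scaffold_def by blast+
lemma lam_ratio: "t1 mod int N = t2 mod int N \<Longrightarrow> lam t1 / lam t2 \<in> K"
  using scaf unfolding scaffold_def by blast
lemma Psi_cong: "i \<in> {1..n} \<Longrightarrow> \<exists>u\<in>unitsOK K v.
        cong_T v T (act (Psi i) (lam t))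
          (if 1 \<le> digit p (n - i) (fraka p n bs t)
           then u * lam (t + int p ^ (n - i) * bs i) else 0)
          (lam (t + int p ^ (n - i) * bs i))"
  using scaf unfolding scaffold_def by blast

lemma act_addl: "act (a + b) x = act a x + act b x"
  and act_mult: "act (a * b) x = act a (act b x)"
  and act_one: "act 1 x = x"
  and act_addr: "act a (x + y) = act a x + act a y"
  and act_K: "c \<in> K \<Longrightarrow> act a (c * x) = c * act a x"
  and act_alg: "c \<in> K \<Longrightarrow> act (alg c) x = c * x"
  using alg_act unfolding algebra_action_def by blast+

lemma act_zero: "act a 0 = 0"
proof -
  have "act a 0 + act a 0 = act a 0 + 0" using act_addr[of a 0 0] by simp
  then show ?thesis by (rule add_left_imp_eq)
qed

lemma act_sum: "finite F \<Longrightarrow> act a (\<Sum>k\<in>F. f k) = (\<Sum>k\<in>F. act a (f k))"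
  by (induction F rule: finite_induct) (auto simp: act_zero act_addr)

lemma K_spanning_L: "spanK K B y" if "K_spanning K (\<lambda>x. x) B" for B y
  using that unfolding K_spanning_def spanK_def by blast

lemma units_mult: "u \<in> unitsOK K v \<Longrightarrow> u' \<in> unitsOK K v \<Longrightarrow> u * u' \<in> unitsOK K v"
  unfolding unitsOK_def using v_mult by auto

lemma one_unit: "1 \<in> unitsOK K v"
  unfolding unitsOK_def using v_one by simp

lemma cong_iff: "cong_T v T x y m = val_ge_T v (x - y) (v m) T"
  unfolding cong_T_def val_ge_T_def by (cases T) auto

lemma vT_0[simp]: "val_ge_T v 0 c T"
  unfolding val_ge_T_def by (cases T) auto

lemma vT_add: "val_ge_T v x c T \<Longrightarrow> val_ge_T v y c T \<Longrightarrow> val_ge_T v (x + y) c T"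
  unfolding val_ge_T_def
proof (cases T)
  case (enat k)
  assume "case T of \<infinity> \<Rightarrow> x = 0 | enat k \<Rightarrow> x = 0 \<or> c + int k \<le> v x"
    "case T of \<infinity> \<Rightarrow> y = 0 | enat k \<Rightarrow> y = 0 \<or> c + int k \<le> v y"
  then have "geV v (c + int k) x" "geV v (c + int k) y" using enat unfolding geV_def by auto
  then have "geV v (c + int k) (x + y)" by (rule geV_add)
  then show "case T of \<infinity> \<Rightarrow> x + y = 0 | enat k \<Rightarrow> x + y = 0 \<or> c + int k \<le> v (x + y)"
    using enat unfolding geV_def by auto
qed auto

lemma vT_mult: "val_ge_T v x c T \<Longrightarrow> a \<noteq> 0 \<Longrightarrow> val_ge_T v (a * x) (v a + c) T"
  unfolding val_ge_T_def
proof (cases T)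
  case (enat k)
  assume "case T of \<infinity> \<Rightarrow> x = 0 | enat k \<Rightarrow> x = 0 \<or> c + int k \<le> v x" "a \<noteq> 0"
  then show "case T of \<infinity> \<Rightarrow> a * x = 0 | enat k \<Rightarrow> a * x = 0 \<or> v a + c + int k \<le> v (a * x)"
    using enat v_mult[of a x] by (cases "x = 0") auto
qed auto

lemma vT_mono: "val_ge_T v x c T \<Longrightarrow> c' \<le> c \<Longrightarrow> val_ge_T v x c' T"
  unfolding val_ge_T_def by (cases T) auto

lemma vT_geV: "val_ge_T v x c T \<Longrightarrow> geV v (c + 1) x"
  using T1 unfolding val_ge_T_def geV_def
  by (cases T) (auto simp: one_enat_def)

lemma geV_vT_inf: "T = \<infinity> \<Longrightarrow> val_ge_T v x c T \<Longrightarrow> x = 0"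
  unfolding val_ge_T_def by simp

section \<open>The lambdas form a basis\<close>

lemma lam_indep:
  assumes cK: "\<forall>k\<in>{0..<int N}. c k \<in> K" and k0: "k0 \<in> {0..<int N}" "c k0 \<noteq> 0"
  shows "(\<Sum>k\<in>{0..<int N}. c k * lam k) \<noteq> 0 \<and>
    (\<forall>k\<in>{0..<int N}. c k \<noteq> 0 \<longrightarrow> v (\<Sum>k\<in>{0..<int N}. c k * lam k) \<le> v (c k * lam k))"
proof -
  define S where "S = {0..<int N}"
  define F where "F = {k\<in>S. c k \<noteq> 0}"
  have eq: "(\<Sum>k\<in>S. c k * lam k) = (\<Sum>k\<in>F. c k * lam k)"
    unfolding F_def S_def by (rule sum.mono_neutral_right) auto
  have fF: "finite F" "F \<noteq> {}" using k0 unfolding F_def S_def by (auto intro: finite_subset[of _ "{0..<int N}"])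
  have nz: "\<And>k. k \<in> F \<Longrightarrow> c k * lam k \<noteq> 0" unfolding F_def using lam_nz by auto
  have vv: "v (c k * lam k) = v (c k) + k" if "k \<in> F" for k
    using that lam_nz v_mult v_lam unfolding F_def by auto
  have inj: "inj_on (\<lambda>k. v (c k * lam k)) F"
  proof (rule inj_onI)
    fix k k' assume kk: "k \<in> F" "k' \<in> F" "v (c k * lam k) = v (c k' * lam k')"
    have d1: "int N dvd v (c k)" "int N dvd v (c k')"
      using kk cK vK unfolding F_def S_def by auto
    have "v (c k) + k = v (c k') + k'" using kk vv by simp
    then have "k - k' = v (c k') - v (c k)" by linarith
    moreover have "int N dvd v (c k') - v (c k)" using d1 by (rule dvd_diff[rotated])
    ultimately have "int N dvd k - k'" by simp
    then have "k mod int N = k' mod int N" by (simp only: mod_eq_dvd_iff)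
    moreover have "k \<in> S" "k' \<in> S" using kk unfolding F_def by auto
    ultimately show "k = k'" unfolding S_def by simp
  qed
  have r: "(\<Sum>k\<in>F. c k * lam k) \<noteq> 0 \<and> v (\<Sum>k\<in>F. c k * lam k) = Min ((\<lambda>k. v (c k * lam k)) ` F)"
    by (rule sum_distinct_val[OF fF nz inj])
  show ?thesis
  proof
    show "(\<Sum>k\<in>{0..<int N}. c k * lam k) \<noteq> 0" using r eq unfolding S_def by simp
    show "\<forall>k\<in>{0..<int N}. c k \<noteq> 0 \<longrightarrow> v (\<Sum>k\<in>{0..<int N}. c k * lam k) \<le> v (c k * lam k)"
    proof (intro ballI impI)
      fix k assume "k \<in> {0..<int N}" "c k \<noteq> 0"
      then have "k \<in> F" unfolding F_def S_def by simp
      then show "v (\<Sum>k\<in>{0..<int N}. c k * lam k) \<le> v (c k * lam k)"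
        using r eq fF unfolding S_def by simp
    qed
  qed
qed

lemma lam_span: "\<exists>c. (\<forall>k\<in>{0..<int N}. c k \<in> K) \<and> x = (\<Sum>k\<in>{0..<int N}. c k * lam k)"
proof -
  obtain B where B: "finite B" "card B = N" "K_spanning K (\<lambda>x. x) B"
    using setting unfolding extension_setting_def has_K_dim_def by blast
  define S where "S = {0..<int N}"
  define J where "J = {0..int N}"
  define w where "w j = (if j = int N then x else lam j)" for j
  have JS: "J = insert (int N) S" "int N \<notin> S" unfolding J_def S_def by auto
  have fS: "finite S" unfolding S_def by simp
  have "card J = nat (int N - 0 + 1)" unfolding J_def by (rule card_atLeastAtMost_int)
  also have "int N - 0 + 1 = int (N + 1)" by simp
  finally have cJ: "card J = N + 1" by (simp only: nat_int)
  have sp: "\<forall>j\<in>J. spanK K B (w j)" using K_spanning_L[OF B(3)] by blast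
  have lt: "card B < card J" using B(2) cJ by simp
  have fJ: "finite J" unfolding J_def by simp
  obtain c where c: "\<forall>j\<in>J. c j \<in> K" "(\<Sum>j\<in>J. c j * w j) = 0" "\<exists>j\<in>J. c j \<noteq> 0"
    using dependent_lemma[OF B(1) fJ lt sp] by blast
  have s: "(\<Sum>j\<in>J. c j * w j) = c (int N) * x + (\<Sum>j\<in>S. c j * lam j)"
  proof -
    have "(\<Sum>j\<in>J. c j * w j) = c (int N) * w (int N) + (\<Sum>j\<in>S. c j * w j)"
      using JS fS by simp
    moreover have "(\<Sum>j\<in>S. c j * w j) = (\<Sum>j\<in>S. c j * lam j)"
      using JS unfolding w_def by (intro sum.cong) auto
    ultimately show ?thesis unfolding w_def by simp
  qed
  have cS: "\<forall>k\<in>S. c k \<in> K" using c(1) JS by blast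
  show ?thesis
  proof (cases "c (int N) = 0")
    case True
    obtain j where j: "j \<in> J" "c j \<noteq> 0" using c(3) by blast
    then have jS: "j \<in> S" using JS True by auto
    have "(\<Sum>j\<in>S. c j * lam j) \<noteq> 0" using lam_indep[of c j] cS jS j(2) unfolding S_def by blast
    moreover have "(\<Sum>j\<in>S. c j * lam j) = 0" using s c(2) True by simp
    ultimately show ?thesis by blast
  next
    case False
    have cN: "c (int N) \<in> K" using c(1) JS by blast
    have e1: "c (int N) * x = - (\<Sum>j\<in>S. c j * lam j)"
      using s c(2) by (simp add: eq_neg_iff_add_eq_0)
    have "x = (c (int N) * x) / c (int N)" using False by simp
    also have "\<dots> = (- (\<Sum>j\<in>S. c j * lam j)) / c (int N)" using e1 by simp
    also have "\<dots> = (\<Sum>j\<in>S. - (c j * lam j) / c (int N))"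
      by (simp only: sum_negf[symmetric] sum_divide_distrib)
    also have "\<dots> = (\<Sum>j\<in>S. (- c j / c (int N)) * lam j)"
      by (intro sum.cong refl) (simp add: field_simps)
    finally have "x = (\<Sum>j\<in>S. (- c j / c (int N)) * lam j)" .
    moreover have "\<forall>k\<in>S. - c k / c (int N) \<in> K" using cS cN by (intro ballI Kdiv Kminus) auto
    ultimately show ?thesis unfolding S_def by (intro exI[of _ "\<lambda>j. - c j / c (int N)"]) auto
  qed
qed

end


context ctx begin

abbreviation sh :: "nat \<Rightarrow> int" where "sh i \<equiv> int p ^ (n - i) * bs i"

lemma psi_lam_geV:
  assumes i: "i \<in> {1..n}"
  shows "geV v (k + sh i) (act (Psi i) (lam k))"
proof -
  obtain u where u: "u \<in> unitsOK K v" and cg: "cong_T v T (act (Psi i) (lam k))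
          (if 1 \<le> digit p (n - i) (fraka p n bs k) then u * lam (k + sh i) else 0) (lam (k + sh i))"
    using Psi_cong[OF i, of k] by blast
  define Y where "Y = (if 1 \<le> digit p (n - i) (fraka p n bs k) then u * lam (k + sh i) else 0)"
  have "val_ge_T v (act (Psi i) (lam k) - Y) (k + sh i) T"
    using cg unfolding Y_def cong_iff v_lam .
  then have g1: "geV v (k + sh i) (act (Psi i) (lam k) - Y)"
    using vT_geV geV_mono by fastforce
  have g2: "geV v (k + sh i) Y"
  proof (cases "1 \<le> digit p (n - i) (fraka p n bs k)")
    case True
    have "u \<noteq> 0" "v u = 0" using u unfolding unitsOK_def by auto
    then show ?thesis using True lam_nz v_lam v_mult unfolding Y_def geV_def by simp
  qed (simp add: Y_def)
  show ?thesis using geV_add[OF g1 g2] by simp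
qed

lemma act_geV:
  assumes x: "geV v M x" and i: "i \<in> {1..n}"
  shows "geV v (M + sh i) (act (Psi i) x)"
proof (cases "x = 0")
  case True then show ?thesis by (simp add: act_zero)
next
  case False
  obtain c where c: "\<forall>k\<in>{0..<int N}. c k \<in> K" "x = (\<Sum>k\<in>{0..<int N}. c k * lam k)"
    using lam_span by blast
  have vx: "M \<le> v x" using x False unfolding geV_def by simp
  have "act (Psi i) x = (\<Sum>k\<in>{0..<int N}. c k * act (Psi i) (lam k))"
    using c by (simp add: act_sum act_K)
  moreover have "geV v (M + sh i) (c k * act (Psi i) (lam k))" if k: "k \<in> {0..<int N}" for k
  proof (cases "c k = 0")
    case True then show ?thesis by simp
  next
    case ck: False
    have "v x \<le> v (c k * lam k)" using lam_indep[of c k] c k ck by auto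
    then have "M \<le> v (c k) + k" using vx v_mult[of "c k" "lam k"] ck lam_nz v_lam by simp
    moreover have "geV v (v (c k) + (k + sh i)) (c k * act (Psi i) (lam k))"
      using geV_mult[OF psi_lam_geV[OF i] ck] .
    ultimately show ?thesis using geV_mono by fastforce
  qed
  moreover have fin: "finite {0..<int N}" by simp
  ultimately show ?thesis using geV_sum[OF fin, of "M + sh i" "\<lambda>k. c k * act (Psi i) (lam k)"] by simp
qed

lemma vT_act:
  assumes x: "val_ge_T v x M T" and i: "i \<in> {1..n}"
  shows "val_ge_T v (act (Psi i) x) (M + sh i) T"
proof (cases T)
  case (enat k)
  then have "geV v (M + int k) x" using x unfolding val_ge_T_def geV_def by simp
  then have "geV v (M + int k + sh i) (act (Psi i) x)" using act_geV i by blast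
  then show ?thesis using enat unfolding val_ge_T_def geV_def by (simp add: algebra_simps)
next
  case infinity
  then show ?thesis using x unfolding val_ge_T_def by (simp add: act_zero)
qed

end


context ctx begin

definition SH :: "nat list \<Rightarrow> int" where
  "SH w = (\<Sum>i\<in>{1..n}. int (count_list w i) * sh i)"

definition fits :: "nat list \<Rightarrow> int \<Rightarrow> bool" where
  "fits w t \<longleftrightarrow> (\<forall>i\<in>{1..n}. count_list w i \<le> digit p (n - i) (fraka p n bs t))"

lemma SH_Nil: "SH [] = 0" unfolding SH_def by simp

lemma SH_Cons: assumes a: "a \<in> {1..n}" shows "SH (a # w) = SH w + sh a"
proof -
  have "SH (a # w) = (\<Sum>i\<in>{1..n}. int (count_list w i) * sh i + (if a = i then sh i else 0))"
    unfolding SH_def by (intro sum.cong refl) (auto simp: algebra_simps)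
  also have "\<dots> = SH w + sh a" unfolding SH_def using a by (simp add: sum.distrib)
  finally show ?thesis .
qed

lemma unit_props: "u \<in> unitsOK K v \<Longrightarrow> u \<in> K \<and> u \<noteq> 0 \<and> v u = 0"
  unfolding unitsOK_def by simp

lemma word_lemma:
  assumes "set w \<subseteq> {1..n}"
  shows "(fits w t \<longrightarrow>
      (\<exists>u\<in>unitsOK K v. val_ge_T v (act (prod_list (map Psi w)) (lam t) - u * lam (t + SH w)) (t + SH w) T) \<and>
      (\<forall>i\<in>{1..n}. digit p (n - i) (fraka p n bs (t + SH w)) = digit p (n - i) (fraka p n bs t) - count_list w i)) \<and>
    (\<not> fits w t \<longrightarrow> val_ge_T v (act (prod_list (map Psi w)) (lam t)) (t + SH w) T)"
  using assms
proof (induction w)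
  case Nil
  have "fits [] t" unfolding fits_def by simp
  moreover have "val_ge_T v (act 1 (lam t) - 1 * lam t) t T" by (simp add: act_one)
  ultimately show ?case using one_unit by (auto simp: SH_Nil act_one intro!: bexI[of _ 1])
next
  case (Cons a w)
  have a: "a \<in> {1..n}" and sw: "set w \<subseteq> {1..n}" using Cons.prems by auto
  define t1 where "t1 = t + SH w"
  define t2 where "t2 = t1 + sh a"
  define x where "x = act (prod_list (map Psi w)) (lam t)"
  have SHa: "t + SH (a # w) = t2" unfolding t2_def t1_def using SH_Cons[OF a] by simp
  have ax: "act (prod_list (map Psi (a # w))) (lam t) = act (Psi a) x"
    unfolding x_def by (simp add: act_mult)
  have IH: "(fits w t \<longrightarrow>
      (\<exists>u\<in>unitsOK K v. val_ge_T v (x - u * lam t1) t1 T) \<and>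
      (\<forall>i\<in>{1..n}. digit p (n - i) (fraka p n bs t1) = digit p (n - i) (fraka p n bs t) - count_list w i)) \<and>
    (\<not> fits w t \<longrightarrow> val_ge_T v x t1 T)"
    using Cons.IH[OF sw] unfolding x_def t1_def .
  have cnt: "count_list (a # w) i = count_list w i + (if a = i then 1 else 0)" for i by simp
  obtain u' where u': "u' \<in> unitsOK K v" and cg: "cong_T v T (act (Psi a) (lam t1))
          (if 1 \<le> digit p (n - a) (fraka p n bs t1) then u' * lam t2 else 0) (lam t2)"
    using Psi_cong[OF a, of t1] unfolding t2_def by blast
  have cg': "val_ge_T v (act (Psi a) (lam t1) - (if 1 \<le> digit p (n - a) (fraka p n bs t1) then u' * lam t2 else 0)) t2 T"
    using cg unfolding cong_iff v_lam .
  show ?case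
  proof (cases "fits w t")
    case fw: False
    then have nf: "\<not> fits (a # w) t" unfolding fits_def using cnt by fastforce
    have "val_ge_T v x t1 T" using IH fw by blast
    then have "val_ge_T v (act (Psi a) x) t2 T" unfolding t2_def using vT_act a by blast
    then show ?thesis using nf ax SHa by simp
  next
    case fw: True
    obtain u where u: "u \<in> unitsOK K v" and E: "val_ge_T v (x - u * lam t1) t1 T"
      and dg: "\<forall>i\<in>{1..n}. digit p (n - i) (fraka p n bs t1) = digit p (n - i) (fraka p n bs t) - count_list w i"
      using IH fw by blast
    have uK: "u \<in> K" "u \<noteq> 0" "v u = 0" using unit_props[OF u] by auto
    define E where "E = x - u * lam t1"
    have xE: "x = u * lam t1 + E" unfolding E_def by simp
    have actx: "act (Psi a) x = u * act (Psi a) (lam t1) + act (Psi a) E"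
      unfolding xE by (simp add: act_addr act_K uK)
    have E2: "val_ge_T v (act (Psi a) E) t2 T" unfolding t2_def E_def using vT_act[OF E a] .
    show ?thesis
    proof (cases "fits (a # w) t")
      case True
      have ge: "count_list w a + 1 \<le> digit p (n - a) (fraka p n bs t)"
        using True a unfolding fits_def by (metis cnt)
      have d1: "1 \<le> digit p (n - a) (fraka p n bs t1)" using dg a ge by simp
      have m: "val_ge_T v (act (Psi a) (lam t1) - u' * lam t2) t2 T" using cg' d1 by simp
      have "val_ge_T v (u * (act (Psi a) (lam t1) - u' * lam t2)) (v u + t2) T"
        using vT_mult[OF m uK(2)] .
      then have m2: "val_ge_T v (u * (act (Psi a) (lam t1) - u' * lam t2)) t2 T" using uK by simp
      have "act (Psi a) x - (u * u') * lam t2 = u * (act (Psi a) (lam t1) - u' * lam t2) + act (Psi a) E"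
        unfolding actx by (simp add: algebra_simps)
      then have r1: "val_ge_T v (act (Psi a) x - (u * u') * lam t2) t2 T"
        using vT_add[OF m2 E2] by simp
      have r2: "\<forall>i\<in>{1..n}. digit p (n - i) (fraka p n bs t2) = digit p (n - i) (fraka p n bs t) - count_list (a # w) i"
      proof
        fix i assume i: "i \<in> {1..n}"
        have "digit p (n - i) (fraka p n bs t2) =
          (if n - i = n - a then digit p (n - i) (fraka p n bs t1) - 1 else digit p (n - i) (fraka p n bs t1))"
          unfolding t2_def using fraka_shift_digit[OF a d1] .
        moreover have "(n - i = n - a) = (i = a)" using i a by auto
        ultimately show "digit p (n - i) (fraka p n bs t2) = digit p (n - i) (fraka p n bs t) - count_list (a # w) i"
          using dg i by auto
      qed
      show ?thesis using r1 r2 True ax SHa units_mult[OF u u'] by auto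
    next
      case False
      have "\<not> count_list w a + 1 \<le> digit p (n - a) (fraka p n bs t)"
      proof
        assume "count_list w a + 1 \<le> digit p (n - a) (fraka p n bs t)"
        then have "fits (a # w) t" using fw unfolding fits_def using cnt by fastforce
        then show False using False by blast
      qed
      then have d0: "\<not> 1 \<le> digit p (n - a) (fraka p n bs t1)" using dg a by simp
      have m: "val_ge_T v (act (Psi a) (lam t1)) t2 T" using cg' d0 by simp
      have m2: "val_ge_T v (u * act (Psi a) (lam t1)) t2 T" using vT_mult[OF m uK(2)] uK by simp
      have "val_ge_T v (act (Psi a) x) t2 T" unfolding actx using vT_add[OF m2 E2] .
      then show ?thesis using False ax SHa by simp
    qed
  qed
qed

end


context valn begin
lemma v_pow: "x \<noteq> 0 \<Longrightarrow> v (x ^ k) = int k * v x"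
  by (induction k) (auto simp: v_one v_mult algebra_simps)
lemma v_powi: assumes "x \<noteq> 0" shows "v (x powi z) = z * v x"
proof (cases "z \<ge> 0")
  case True then show ?thesis using v_pow[OF assms, of "nat z"] by (simp add: power_int_def)
next
  case False
  have "inverse x \<noteq> 0" using assms by simp
  then show ?thesis using False v_pow[of "inverse x" "nat (-z)"] v_inverse[OF assms]
    by (simp add: power_int_def)
qed
end

context ctx begin

lemma main:
  assumes s_range: "s < p ^ n"
    and t_range: "h \<le> t" "t < h + int (p ^ n)"
    and Psi_mem: "\<Psi> \<in> Upsilon p n Psi s"
  shows
    "(prec p n s (fraka p n bs t) \<longrightarrow>
       (\<exists>y\<in>unitsOK K v.
          cong_T v T (act (alg (\<pi> powi (- wfun p n bs h s)) * \<Psi>) (lam t))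
            (\<pi> powi (epsfun p n bs h s t) * y * lam (Hfun p n bs h s t))
            (\<pi> powi (epsfun p n bs h s t) * lam (Hfun p n bs h s t))) \<and>
       (epsfun p n bs h s t = 0 \<longrightarrow>
          act (alg (\<pi> powi (- wfun p n bs h s)) * \<Psi>) (lam t) \<noteq> 0 \<and> v (act (alg (\<pi> powi (- wfun p n bs h s)) * \<Psi>) (lam t)) = Hfun p n bs h s t) \<and>
       (epsfun p n bs h s t = 1 \<longrightarrow>
          act (alg (\<pi> powi (- wfun p n bs h s)) * \<Psi>) (lam t) \<noteq> 0 \<and> v (act (alg (\<pi> powi (- wfun p n bs h s)) * \<Psi>) (lam t)) = Hfun p n bs h s t + int (p ^ n))) \<and>
     (\<not> prec p n s (fraka p n bs t) \<longrightarrow>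
       val_ge_T v (act (alg (\<pi> powi (- wfun p n bs h s)) * \<Psi>) (lam t))
         (Hfun p n bs h s (bpt p n bs h) + t - bpt p n bs h) T)"
proof -
  obtain w where w: "set w \<subseteq> {1..n}" "\<forall>i\<in>{1..n}. count_list w i = digit p (n - i) s"
    "\<Psi> = prod_list (map Psi w)"
    using Psi_mem unfolding Upsilon_def by blast
  define W where "W = wfun p n bs h s"
  define D where "D = Dfun p n bs h s t"
  define H where "H = Hfun p n bs h s t"
  define E where "E = epsfun p n bs h s t"
  define t' where "t' = t + frakb p n bs s"
  define c0 where "c0 = \<pi> powi (- W)"
  have NN: "int N > 0" using Npos by simp
  have SHw: "SH w = frakb p n bs s"
    unfolding SH_def frakb_def using w(2) by (intro sum.cong refl) (simp add: mult.assoc)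
  have fitsw: "fits w t = prec p n s (fraka p n bs t)"
  proof
    assume f: "fits w t"
    show "prec p n s (fraka p n bs t)" unfolding prec_def
    proof (intro allI impI)
      fix j assume j: "j < n"
      then have i: "n - j \<in> {1..n}" by auto
      then have "count_list w (n - j) \<le> digit p (n - (n - j)) (fraka p n bs t)" using f unfolding fits_def by blast
      then show "digit p j s \<le> digit p j (fraka p n bs t)" using w(2) i j by auto
    qed
  next
    assume pr: "prec p n s (fraka p n bs t)"
    show "fits w t" unfolding fits_def
    proof
      fix i assume i: "i \<in> {1..n}"
      then have "n - i < n" by auto
      then show "count_list w i \<le> digit p (n - i) (fraka p n bs t)" using pr w(2) i unfolding prec_def by auto
    qed
  qed
  have WL: "(fits w t \<longrightarrow>
      (\<exists>u\<in>unitsOK K v. val_ge_T v (act \<Psi> (lam t) - u * lam t') t' T)) \<and>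
    (\<not> fits w t \<longrightarrow> val_ge_T v (act \<Psi> (lam t)) t' T)"
    using word_lemma[OF w(1), of t] unfolding SHw w(3) t'_def by blast
  have c0K: "c0 \<in> K" "c0 \<noteq> 0" unfolding c0_def using pi_K pi_nz by auto
  have vc0: "v c0 = - W * int N" unfolding c0_def using v_powi[OF pi_nz] v_pi by simp
  have actPhi: "act (alg c0 * \<Psi>) (lam t) = c0 * act \<Psi> (lam t)"
    using act_mult act_alg c0K by simp
  have tH: "t' = H + int N * D"
  proof -
    have "frakb p n bs s + t - h = int N * D + (frakb p n bs s + t - h) mod int N"
      unfolding D_def Dfun_def by simp
    then show ?thesis unfolding H_def Hfun_def t'_def by simp
  qed
  have ED: "E = D - W" unfolding E_def D_def W_def epsfun_def by simp
  show ?thesis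
  proof (rule conjI[OF impI impI])
    assume pr: "prec p n s (fraka p n bs t)"
    obtain u where u: "u \<in> unitsOK K v" and Eu: "val_ge_T v (act \<Psi> (lam t) - u * lam t') t' T"
      using WL fitsw pr by blast
    have uK: "u \<in> K" "u \<noteq> 0" "v u = 0" using unit_props[OF u] by auto
    define \<rho> where "\<rho> = lam t' / lam H"
    have \<rho>K: "\<rho> \<in> K" unfolding \<rho>_def using tH by (intro lam_ratio) simp
    have \<rho>nz: "\<rho> \<noteq> 0" unfolding \<rho>_def using lam_nz by simp
    have v\<rho>: "v \<rho> = int N * D" unfolding \<rho>_def using v_divide lam_nz v_lam tH by simp
    define y where "y = u * \<rho> * \<pi> powi (- D)"
    have yU: "y \<in> unitsOK K v"
      unfolding y_def unitsOK_def using uK \<rho>K \<rho>nz pi_K pi_nz v\<rho>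
      by (auto simp: v_mult v_powi v_pi)
    define m where "m = \<pi> powi E * lam H"
    have mnz: "m \<noteq> 0" unfolding m_def using pi_nz lam_nz by simp
    have vm: "v m = t' - W * int N"
    proof -
      have "v m = E * int N + H" unfolding m_def using v_mult pi_nz lam_nz v_powi v_pi v_lam by simp
      also have "\<dots> = (D - W) * int N + H" using ED by simp
      also have "\<dots> = t' - W * int N" using tH by (simp add: left_diff_distrib mult.commute)
      finally show ?thesis .
    qed
    have key: "c0 * (u * lam t') = \<pi> powi E * y * lam H"
    proof -
      have "\<pi> powi E * \<pi> powi (- D) = \<pi> powi (- W)"
        using power_int_add[of \<pi> E "- D"] pi_nz ED by simp
      moreover have "\<rho> * lam H = lam t'" unfolding \<rho>_def using lam_nz by simp
      moreover have "\<pi> powi E * y * lam H = u * (\<rho> * lam H) * (\<pi> powi E * \<pi> powi (- D))"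
        unfolding y_def by (simp only: ac_simps)
      ultimately have "\<pi> powi E * y * lam H = u * lam t' * \<pi> powi (- W)" by simp
      then show ?thesis unfolding c0_def by (simp add: ac_simps)
    qed
    have diffeq: "act (alg c0 * \<Psi>) (lam t) - \<pi> powi E * y * lam H = c0 * (act \<Psi> (lam t) - u * lam t')"
      using actPhi key by (simp add: right_diff_distrib)
    have vd: "val_ge_T v (act (alg c0 * \<Psi>) (lam t) - \<pi> powi E * y * lam H) (v m) T"
    proof -
      have e: "v c0 + t' = v m" using vc0 vm by simp
      show ?thesis unfolding diffeq using vT_mult[OF Eu c0K(2)] unfolding e .
    qed
    have C: "cong_T v T (act (alg c0 * \<Psi>) (lam t)) (\<pi> powi E * y * lam H) (\<pi> powi E * lam H)"
      unfolding cong_iff using vd unfolding m_def .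
    have val: "act (alg c0 * \<Psi>) (lam t) \<noteq> 0 \<and> v (act (alg c0 * \<Psi>) (lam t)) = v m"
    proof -
      define M where "M = \<pi> powi E * y * lam H"
      define e where "e = act (alg c0 * \<Psi>) (lam t) - M"
      have yy: "y \<noteq> 0" "v y = 0" using yU unfolding unitsOK_def by auto
      have Mnz: "M \<noteq> 0" unfolding M_def using pi_nz lam_nz yy by simp
      have vM: "v M = v m" unfolding M_def m_def using yy pi_nz lam_nz v_mult by simp
      have ge: "geV v (v m + 1) e" using vT_geV vd unfolding e_def M_def by blast
      have sum: "act (alg c0 * \<Psi>) (lam t) = M + e" unfolding e_def by simp
      show ?thesis
      proof (cases "e = 0")
        case True then show ?thesis using sum Mnz vM by simp
      next
        case False
        then have "v M < v e" using ge vM unfolding geV_def by simp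
        then show ?thesis using v_strict[OF Mnz False] sum vM by simp
      qed
    qed
    have vmE: "v m = H + E * int N"
      unfolding m_def using v_mult pi_nz lam_nz v_powi v_pi v_lam by simp
    have f1: "\<exists>y\<in>unitsOK K v. cong_T v T (act (alg (\<pi> powi (- wfun p n bs h s)) * \<Psi>) (lam t))
        (\<pi> powi epsfun p n bs h s t * y * lam (Hfun p n bs h s t))
        (\<pi> powi epsfun p n bs h s t * lam (Hfun p n bs h s t))"
      using C yU unfolding c0_def W_def E_def H_def by blast
    have f2: "epsfun p n bs h s t = 0 \<longrightarrow>
      act (alg (\<pi> powi (- wfun p n bs h s)) * \<Psi>) (lam t) \<noteq> 0 \<and>
      v (act (alg (\<pi> powi (- wfun p n bs h s)) * \<Psi>) (lam t)) = Hfun p n bs h s t"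
      using val vmE unfolding c0_def W_def E_def H_def by simp
    have f3: "epsfun p n bs h s t = 1 \<longrightarrow>
      act (alg (\<pi> powi (- wfun p n bs h s)) * \<Psi>) (lam t) \<noteq> 0 \<and>
      v (act (alg (\<pi> powi (- wfun p n bs h s)) * \<Psi>) (lam t)) = Hfun p n bs h s t + int (p ^ n)"
      using val vmE unfolding c0_def W_def E_def H_def by simp
    from f1 f2 f3 show "(\<exists>y\<in>unitsOK K v. cong_T v T (act (alg (\<pi> powi (- wfun p n bs h s)) * \<Psi>) (lam t))
        (\<pi> powi epsfun p n bs h s t * y * lam (Hfun p n bs h s t))
        (\<pi> powi epsfun p n bs h s t * lam (Hfun p n bs h s t))) \<and>
      (epsfun p n bs h s t = 0 \<longrightarrow>
      act (alg (\<pi> powi (- wfun p n bs h s)) * \<Psi>) (lam t) \<noteq> 0 \<and>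
      v (act (alg (\<pi> powi (- wfun p n bs h s)) * \<Psi>) (lam t)) = Hfun p n bs h s t) \<and>
      (epsfun p n bs h s t = 1 \<longrightarrow>
      act (alg (\<pi> powi (- wfun p n bs h s)) * \<Psi>) (lam t) \<noteq> 0 \<and>
      v (act (alg (\<pi> powi (- wfun p n bs h s)) * \<Psi>) (lam t)) = Hfun p n bs h s t + int (p ^ n))"
      by blast
  next
    assume npr: "\<not> prec p n s (fraka p n bs t)"
    have g: "val_ge_T v (act \<Psi> (lam t)) t' T" using WL fitsw npr by blast
    have g2: "val_ge_T v (act (alg c0 * \<Psi>) (lam t)) (t' - W * int N) T"
      using vT_mult[OF g c0K(2)] vc0 actPhi by (simp add: algebra_simps)
    define b where "b = bpt p n bs h"
    have b: "h \<le> b" "b < h + int N" using bpt_spec[of h] unfolding b_def by auto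
    define d where "d = dfun p n bs h s"
    have hb: "Hfun p n bs h s b + int N * d = frakb p n bs s + b"
    proof -
      have "frakb p n bs s + b - h = int N * d + (frakb p n bs s + b - h) mod int N"
        unfolding d_def dfun_def Dfun_def b_def by simp
      then show ?thesis unfolding Hfun_def by simp
    qed
    have d0: "dfun p n bs h 0 = 0"
      unfolding dfun_def Dfun_def frakb_0 using b unfolding b_def by (simp add: div_pos_pos_trivial)
    have Wd: "W \<le> d"
    proof -
      define f where "f u = dfun p n bs h u - dfun p n bs h (u - s)" for u
      have eqset: "{dfun p n bs h u - dfun p n bs h (u - s) | u. u < p ^ n \<and> prec p n s u}
          = f ` {u. u < p ^ n \<and> prec p n s u}" unfolding f_def by blast
      have fin: "finite (f ` {u. u < p ^ n \<and> prec p n s u})" by simp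
      have "prec p n s s" unfolding prec_def by simp
      then have "f s \<in> f ` {u. u < p ^ n \<and> prec p n s u}" using s_range by blast
      then have "Min (f ` {u. u < p ^ n \<and> prec p n s u}) \<le> f s" using fin by (rule Min_le[rotated])
      then show ?thesis unfolding W_def wfun_def eqset f_def d_def using d0 by simp
    qed
    have "Hfun p n bs h s b + t - b \<le> t' - W * int N"
    proof -
      have "W * int N \<le> d * int N" using Wd NN by simp
      then show ?thesis using hb unfolding t'_def by (simp add: algebra_simps)
    qed
    then show "val_ge_T v (act (alg (\<pi> powi (- wfun p n bs h s)) * \<Psi>) (lam t))
        (Hfun p n bs h s (bpt p n bs h) + t - bpt p n bs h) T"
      using vT_mono[OF g2] unfolding c0_def W_def b_def by simp
  qed
qed

end

theorem proposition3p10: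
  fixes K :: "'L::field set" and v :: "'L \<Rightarrow> int" and p n :: nat and \<pi> :: 'L
    and alg :: "'L \<Rightarrow> 'A::ring_1" and act :: "'A \<Rightarrow> 'L \<Rightarrow> 'L"
    and bs :: "nat \<Rightarrow> int" and T :: enat and lam :: "int \<Rightarrow> 'L" and Psi :: "nat \<Rightarrow> 'A"
    and h :: int and s :: nat and t :: int and \<Psi> :: 'A
  assumes setting: "extension_setting K v p n \<pi>"
    and alg_act: "algebra_action K (p ^ n) alg act"
    and scaf: "scaffold K v act p n bs T lam Psi"
    and s_range: "s < p ^ n"
    and t_range: "h \<le> t" "t < h + int (p ^ n)"
    and Psi_mem: "\<Psi> \<in> Upsilon p n Psi s"
  defines "\<Phi> \<equiv> alg (\<pi> powi (- wfun p n bs h s)) * \<Psi>"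
  shows
    "(prec p n s (fraka p n bs t) \<longrightarrow>
       (\<exists>y\<in>unitsOK K v.
          cong_T v T (act \<Phi> (lam t))
            (\<pi> powi (epsfun p n bs h s t) * y * lam (Hfun p n bs h s t))
            (\<pi> powi (epsfun p n bs h s t) * lam (Hfun p n bs h s t))) \<and>
       (epsfun p n bs h s t = 0 \<longrightarrow>
          act \<Phi> (lam t) \<noteq> 0 \<and> v (act \<Phi> (lam t)) = Hfun p n bs h s t) \<and>
       (epsfun p n bs h s t = 1 \<longrightarrow>
          act \<Phi> (lam t) \<noteq> 0 \<and> v (act \<Phi> (lam t)) = Hfun p n bs h s t + int (p ^ n))) \<and>
     (\<not> prec p n s (fraka p n bs t) \<longrightarrow>
       val_ge_T v (act \<Phi> (lam t))
         (Hfun p n bs h s (bpt p n bs h) + t - bpt p n bs h) T)"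
  unfolding \<Phi>_def
  by (rule ctx.main[OF ctx.intro[OF setting alg_act scaf] s_range t_range Psi_mem])

end
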